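(* Let $\mathcal{X},\mathcal{Y}$ be finite Markov chains, $C:{\bm X}\times{\bm Y}\to\mathbb{R}_+$ a cost function, and $\delta\in(0,1]$. Let $T^\infty_\delta$ be a random variable with $\Pr(T^\infty_\delta=t)=\delta(1-\delta)^t$ for $t\in\mathbb{N}$. Then $$d^{\delta,(\infty)}_{\mathrm{WL}}(\mathcal{X},\mathcal{Y};C)=\min_{(X_t,Y_t)_{t\in\mathbb{N}}\in\Pi_{\mathrm H}(\mathcal{X},\mathcal{Y})}\mathbb{E}\,C(X_{T^\infty_\delta},Y_{T^\infty_\delta}),$$ where $T^\infty_\delta$ is independent of the coupling, and in particular the minimum is attained.
   Context: A finite Markov chain $\mathcal{X}=({\bm X},m^{\bm X}_\bullet,\nu^{\bm X})$ consists of a finite set ${\bm X}$, a transition kernel $m^{\bm X}_\bullet:{\bm X}\to\mathcal{P}({\bm X})$ and an initial distribution $\nu^{\bm X}$. $\mathcal{C}(\alpha,\beta)$ denotes the set of couplings of $\alpha,\beta$. A Markovian coupling between $\mathcal{X}$ and $\mathcal{Y}$ is a (possibly time-inhomogeneous) Markov chain $(X_t,Y_t)_{t\in\mathbb{N}}$ on ${\bm X}\times{\bm Y}$ with $\mathrm{law}(X_0,Y_0)\in\mathcal{C}(\nu^{\bm X},\nu^{\bm Y})$ and, for all $t,x,y$, the conditional law of $(X_{t+1},Y_{t+1})$ given $(X_t,Y_t)=(x,y)$ in $\mathcal{C}(m^{\bm X}_x,m^{\bm Y}_y)$; $\Pi(\mathcal{X},\mathcal{Y})$ is the set of Markovian couplings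 and $\Pi_{\mathrm H}(\mathcal{X},\mathcal{Y})$ the subset of time homogeneous ones (conditional laws independent of $t$). The depth-$\infty$ $\delta$-discounted WL distance is $d^{\delta,(\infty)}_{\mathrm{WL}}(\mathcal{X},\mathcal{Y};C)=\inf_{(X_t,Y_t)\in\Pi(\mathcal{X},\mathcal{Y})}\mathbb{E}\big[\sum_{t=0}^{\infty}\delta(1-\delta)^tC(X_t,Y_t)\big]$. *)

theory Defs
  imports "HOL-Probability.Probability"
begin

text \<open>A finite Markov chain on a finite type 'a is given by a transition kernel
  m :: 'a \<Rightarrow> 'a pmf and an initial distribution nu :: 'a pmf.\<close>

definition is_coupling :: "('a \<times> 'b) pmf \<Rightarrow> 'a pmf \<Rightarrow> 'b pmf \<Rightarrow> bool" where
  "is_coupling p \<alpha> \<beta> \<longleftrightarrow> map_pmf fst p = \<alpha> \<and> map_pmf snd p = \<beta>"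

primrec chain_law :: "('a \<times> 'b) pmf \<Rightarrow> (nat \<Rightarrow> 'a \<times> 'b \<Rightarrow> ('a \<times> 'b) pmf) \<Rightarrow> nat \<Rightarrow> ('a \<times> 'b) pmf" where
  "chain_law mu0 K 0 = mu0"
| "chain_law mu0 K (Suc t) = bind_pmf (chain_law mu0 K t) (K t)"

definition markov_couplings ::
  "('a \<Rightarrow> 'a pmf) \<Rightarrow> 'a pmf \<Rightarrow> ('b \<Rightarrow> 'b pmf) \<Rightarrow> 'b pmf
    \<Rightarrow> (('a \<times> 'b) pmf \<times> (nat \<Rightarrow> 'a \<times> 'b \<Rightarrow> ('a \<times> 'b) pmf)) set" where
  "markov_couplings mX nuX mY nuY =
     {(mu0, K). is_coupling mu0 nuX nuY \<and>
        (\<forall>t x y. is_coupling (K t (x, y)) (mX x) (mY y))}"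

definition hom_markov_couplings ::
  "('a \<Rightarrow> 'a pmf) \<Rightarrow> 'a pmf \<Rightarrow> ('b \<Rightarrow> 'b pmf) \<Rightarrow> 'b pmf
    \<Rightarrow> (('a \<times> 'b) pmf \<times> (nat \<Rightarrow> 'a \<times> 'b \<Rightarrow> ('a \<times> 'b) pmf)) set" where
  "hom_markov_couplings mX nuX mY nuY =
     {(mu0, K) \<in> markov_couplings mX nuX mY nuY. \<forall>t. K t = K 0}"

text \<open>E[ sum_t delta (1-delta)^t C(X_t,Y_t) ], written (by Tonelli, all terms being
  nonnegative) as sum_t delta (1-delta)^t E[C(X_t,Y_t)].\<close>
definition discounted_cost ::
  "real \<Rightarrow> ('a \<Rightarrow> 'b \<Rightarrow> real) \<Rightarrow> ('a \<times> 'b) pmf \<times> (nat \<Rightarrow> 'a \<times> 'b \<Rightarrow> ('a \<times> 'b) pmf) \<Rightarrow> real" where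
  "discounted_cost \<delta> C c =
     (\<Sum>t. \<delta> * (1 - \<delta>) ^ t *
        measure_pmf.expectation (chain_law (fst c) (snd c) t) (\<lambda>(x, y). C x y))"

definition dWL_inf ::
  "real \<Rightarrow> ('a \<Rightarrow> 'a pmf) \<Rightarrow> 'a pmf \<Rightarrow> ('b \<Rightarrow> 'b pmf) \<Rightarrow> 'b pmf \<Rightarrow> ('a \<Rightarrow> 'b \<Rightarrow> real) \<Rightarrow> real" where
  "dWL_inf \<delta> mX nuX mY nuY C =
     (INF c \<in> markov_couplings mX nuX mY nuY. discounted_cost \<delta> C c)"

text \<open>E C(X_T, Y_T) with T ~ Geom(delta) (Pr(T=t) = delta (1-delta)^t) independent
  of the coupling: the law of (X_T,Y_T) is the mixture of the time-t laws.\<close>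
definition cost_at_geometric_time ::
  "real \<Rightarrow> ('a \<Rightarrow> 'b \<Rightarrow> real) \<Rightarrow> ('a \<times> 'b) pmf \<times> (nat \<Rightarrow> 'a \<times> 'b \<Rightarrow> ('a \<times> 'b) pmf) \<Rightarrow> real" where
  "cost_at_geometric_time \<delta> C c =
     measure_pmf.expectation
       (bind_pmf (geometric_pmf \<delta>) (\<lambda>T. chain_law (fst c) (snd c) T)) (\<lambda>(x, y). C x y)"

end

theory Submission imports Defs
begin

definition ex :: "'c::finite pmf \<Rightarrow> ('c \<Rightarrow> real) \<Rightarrow> real" where
  "ex p f = (\<Sum>s\<in>UNIV. pmf p s * f s)"

lemma expectation_ex: "measure_pmf.expectation p f = ex (p::'c::finite pmf) f"
  unfolding ex_def by (subst integral_measure_pmf_real[of UNIV]) (auto simp: mult.commute)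

lemma ex_bind: "ex (bind_pmf M K) f = ex (M::'c::finite pmf) (\<lambda>x. ex (K x :: 'd::finite pmf) f)"
proof -
  have "ex (bind_pmf M K) f = (\<Sum>s\<in>UNIV. (\<Sum>x\<in>UNIV. pmf M x * pmf (K x) s) * f s)"
    unfolding ex_def pmf_bind expectation_ex by (simp add: ex_def)
  also have "\<dots> = (\<Sum>x\<in>UNIV. pmf M x * (\<Sum>s\<in>UNIV. pmf (K x) s * f s))"
    by (simp add: sum_distrib_left sum_distrib_right mult.assoc) (rule sum.swap)
  finally show ?thesis by (simp add: ex_def)
qed

lemma ex_lin: "ex p (\<lambda>s. a * f s + b * g s) = a * ex p f + b * ex p g"
  by (simp add: ex_def sum.distrib sum_distrib_left algebra_simps)

lemma ex_mono: "(\<And>s. f s \<le> g s) \<Longrightarrow> ex p f \<le> ex p g"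
  unfolding ex_def by (intro sum_mono mult_left_mono) auto

lemma ex_const: "ex (p::'c::finite pmf) (\<lambda>_. c) = c"
  unfolding ex_def by (simp add: sum_distrib_right[symmetric] sum_pmf_eq_1)

lemma ex_add_const: "ex (p::'c::finite pmf) (\<lambda>s. f s + c) = ex p f + c"
  unfolding ex_def by (simp add: distrib_left sum.distrib sum_distrib_right[symmetric] sum_pmf_eq_1)

lemma ex_abs: "\<bar>ex (p::'c::finite pmf) f\<bar> \<le> (\<Sum>s\<in>UNIV. \<bar>f s\<bar>)"
  unfolding ex_def
proof -
  have "\<bar>\<Sum>s\<in>UNIV. pmf p s * f s\<bar> \<le> (\<Sum>s\<in>UNIV. \<bar>pmf p s * f s\<bar>)" by (rule sum_abs)
  also have "\<dots> \<le> (\<Sum>s\<in>UNIV. \<bar>f s\<bar>)"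
    by (intro sum_mono) (auto simp: abs_mult intro!: mult_left_le_one_le pmf_le_1)
  finally show "\<bar>\<Sum>s\<in>UNIV. pmf p s * f s\<bar> \<le> (\<Sum>s\<in>UNIV. \<bar>f s\<bar>)" .
qed

lemma pmf_map_fst: "pmf (map_pmf fst q) (a::'a::finite) = (\<Sum>b\<in>UNIV. pmf q (a, b::'b::finite))"
proof -
  have "pmf (map_pmf fst q) a = sum (pmf q) (fst -` {a})"
    by (simp add: pmf_map measure_measure_pmf_finite)
  also have "fst -` {a} = Pair a ` UNIV" by auto
  also have "sum (pmf q) \<dots> = (\<Sum>b\<in>UNIV. pmf q (a, b))"
    by (subst sum.reindex) (auto simp: inj_on_def)
  finally show ?thesis .
qed

lemma pmf_map_snd: "pmf (map_pmf snd q) (b::'b::finite) = (\<Sum>a\<in>UNIV. pmf q (a::'a::finite, b))"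
proof -
  have "pmf (map_pmf snd q) b = sum (pmf q) (snd -` {b})"
    by (simp add: pmf_map measure_measure_pmf_finite)
  also have "snd -` {b} = (\<lambda>a. (a, b)) ` UNIV" by auto
  also have "sum (pmf q) \<dots> = (\<Sum>a\<in>UNIV. pmf q (a, b))"
    by (subst sum.reindex) (auto simp: inj_on_def)
  finally show ?thesis .
qed

lemma coupling_min:
  fixes \<alpha> :: "'a::finite pmf" and \<beta> :: "'b::finite pmf" and V :: "'a \<times> 'b \<Rightarrow> real"
  shows "\<exists>p. is_coupling p \<alpha> \<beta> \<and> (\<forall>q. is_coupling q \<alpha> \<beta> \<longrightarrow> ex p V \<le> ex q V)"
proof -
  define S where "S = {v :: real^('a\<times>'b). (\<forall>s. 0 \<le> v$s) \<and> (\<forall>a. (\<Sum>b\<in>UNIV. v$(a,b)) = pmf \<alpha> a)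
      \<and> (\<forall>b. (\<Sum>a\<in>UNIV. v$(a,b)) = pmf \<beta> b)}"
  have inS: "(\<chi> s. pmf q s) \<in> S" if "is_coupling q \<alpha> \<beta>" for q
    using that unfolding S_def is_coupling_def by (auto simp: pmf_map_fst pmf_map_snd)
  have "is_coupling (pair_pmf \<alpha> \<beta>) \<alpha> \<beta>"
    unfolding is_coupling_def by (simp add: map_fst_pair_pmf map_snd_pair_pmf)
  hence ne: "S \<noteq> {}" using inS by blast
  have cl: "closed S" unfolding S_def
    by (intro closed_Collect_all closed_Collect_conj closed_Collect_le closed_Collect_eq continuous_intros)
  have bd: "bounded S"
  proof -
    have "norm v \<le> real CARD('a\<times>'b)" if "v \<in> S" for v
    proof -
      have "\<bar>v$s\<bar> \<le> 1" for s
      proof -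
        obtain a b where s: "s = (a,b)" by (cases s)
        have "v$(a,b) \<le> (\<Sum>b'\<in>UNIV. v$(a,b'))"
          using that unfolding S_def by (intro member_le_sum) auto
        also have "\<dots> \<le> 1" using that unfolding S_def by (auto simp: pmf_le_1)
        finally show ?thesis using that s unfolding S_def by auto
      qed
      hence "(\<Sum>s\<in>UNIV. \<bar>v$s\<bar>) \<le> (\<Sum>s\<in>(UNIV::('a\<times>'b) set). 1)" by (intro sum_mono) auto
      thus ?thesis using norm_le_l1_cart[of v] by simp
    qed
    thus ?thesis unfolding bounded_iff by blast
  qed
  have "compact S" using cl bd by (simp add: compact_eq_bounded_closed)
  moreover have "continuous_on S (\<lambda>v. \<Sum>s\<in>UNIV. v$s * V s)" by (intro continuous_intros)
  ultimately obtain v where vS: "v \<in> S" and vmin: "\<forall>w\<in>S. (\<Sum>s\<in>UNIV. v$s * V s) \<le> (\<Sum>s\<in>UNIV. w$s * V s)"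
    using continuous_attains_inf[OF _ ne] by blast
  have nn: "\<And>s. 0 \<le> v$s" using vS unfolding S_def by auto
  have "(\<Sum>s\<in>UNIV. v$s) = (\<Sum>a\<in>UNIV. \<Sum>b\<in>UNIV. v$(a,b))"
    by (simp add: sum.cartesian_product UNIV_Times_UNIV[symmetric] del: UNIV_Times_UNIV)
  also have "\<dots> = 1" using vS unfolding S_def by (simp add: sum_pmf_eq_1)
  finally have s1: "(\<Sum>s\<in>UNIV. v$s) = 1" .
  define p where "p = embed_pmf (\<lambda>s. v$s)"
  have pp: "pmf p s = v$s" for s unfolding p_def
    by (rule pmf_embed_pmf) (auto simp: nn nn_integral_count_space_finite s1 sum_ennreal[symmetric])
  have cp: "is_coupling p \<alpha> \<beta>" unfolding is_coupling_def
    using vS unfolding S_def by (auto intro!: pmf_eqI simp: pmf_map_fst pmf_map_snd pp)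
  show ?thesis
  proof (rule exI[of _ p], intro conjI allI impI)
    show "is_coupling p \<alpha> \<beta>" by (rule cp)
  next
    fix q assume "is_coupling q \<alpha> \<beta>"
    have "(\<Sum>s\<in>UNIV. v$s * V s) \<le> (\<Sum>s\<in>UNIV. (\<chi> s. pmf q s)$s * V s)"
      using vmin inS[OF \<open>is_coupling q \<alpha> \<beta>\<close>] by blast
    thus "ex p V \<le> ex q V" by (simp add: ex_def pp)
  qed
qed


definition pol :: "('a::finite \<Rightarrow> 'a pmf) \<Rightarrow> ('b::finite \<Rightarrow> 'b pmf) \<Rightarrow> ('a \<times> 'b \<Rightarrow> real) \<Rightarrow> 'a \<times> 'b \<Rightarrow> ('a \<times> 'b) pmf" where
  "pol mX mY V s = (SOME p. is_coupling p (mX (fst s)) (mY (snd s)) \<and>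
      (\<forall>q. is_coupling q (mX (fst s)) (mY (snd s)) \<longrightarrow> ex p V \<le> ex q V))"

lemma pol: "is_coupling (pol mX mY V s) (mX (fst s)) (mY (snd s))"
  "is_coupling q (mX (fst s)) (mY (snd s)) \<Longrightarrow> ex (pol mX mY V s) V \<le> ex q V"
  using someI_ex[OF coupling_min[of "mX (fst s)" "mY (snd s)" V]] unfolding pol_def by blast+

definition bell :: "real \<Rightarrow> ('a::finite \<times> 'b::finite \<Rightarrow> real) \<Rightarrow> ('a \<Rightarrow> 'a pmf) \<Rightarrow> ('b \<Rightarrow> 'b pmf)
   \<Rightarrow> real^('a \<times> 'b) \<Rightarrow> real^('a \<times> 'b)" where
  "bell \<delta> Cf mX mY V = (\<chi> s. \<delta> * Cf s + (1 - \<delta>) * ex (pol mX mY (vec_nth V) s) (vec_nth V))"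

lemma bell_contr:
  assumes "\<delta> \<le> 1" "\<And>s. \<bar>V$s - W$s\<bar> \<le> M"
  shows "\<bar>bell \<delta> Cf mX mY V $ s - bell \<delta> Cf mX mY W $ s\<bar> \<le> (1 - \<delta>) * M"
proof -
  have h1: "V$s' \<le> W$s' + M" and h2: "W$s' \<le> V$s' + M" for s' using assms(2)[of s'] by linarith+
  define p where "p = pol mX mY (vec_nth V) s"
  define q where "q = pol mX mY (vec_nth W) s"
  have "ex p (vec_nth V) \<le> ex q (vec_nth V)" unfolding p_def q_def by (intro pol pol)
  also have "\<dots> \<le> ex q (\<lambda>s. W$s + M)" by (rule ex_mono) (rule h1)
  finally have 1: "ex p (vec_nth V) \<le> ex q (vec_nth W) + M" by (simp add: ex_add_const)
  have "ex q (vec_nth W) \<le> ex p (vec_nth W)" unfolding p_def q_def by (intro pol pol)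
  also have "\<dots> \<le> ex p (\<lambda>s. V$s + M)" by (rule ex_mono) (rule h2)
  finally have 2: "ex q (vec_nth W) \<le> ex p (vec_nth V) + M" by (simp add: ex_add_const)
  have "\<bar>ex p (vec_nth V) - ex q (vec_nth W)\<bar> \<le> M" using 1 2 by linarith
  hence "(1 - \<delta>) * \<bar>ex p (vec_nth V) - ex q (vec_nth W)\<bar> \<le> (1 - \<delta>) * M"
    using assms(1) by (intro mult_left_mono) auto
  thus ?thesis unfolding bell_def p_def q_def
    using assms(1) by (simp add: right_diff_distrib[symmetric] abs_mult)
qed

lemma bell_iter:
  assumes "\<delta> \<le> 1" "\<And>s. \<bar>V$s - W$s\<bar> \<le> M"
  shows "\<bar>(bell \<delta> Cf mX mY ^^ k) V $ s - (bell \<delta> Cf mX mY ^^ k) W $ s\<bar> \<le> (1 - \<delta>)^k * M"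
proof (induction k arbitrary: s)
  case 0 then show ?case using assms by simp
next
  case (Suc k)
  have "\<bar>bell \<delta> Cf mX mY ((bell \<delta> Cf mX mY ^^ k) V) $ s - bell \<delta> Cf mX mY ((bell \<delta> Cf mX mY ^^ k) W) $ s\<bar>
     \<le> (1 - \<delta>) * ((1 - \<delta>)^k * M)"
    by (rule bell_contr[OF assms(1)]) (rule Suc.IH)
  thus ?case by (simp add: mult.assoc)
qed

lemma bell_fix:
  assumes "0 < \<delta>" "\<delta> \<le> 1"
  shows "\<exists>V. bell \<delta> Cf mX mY V = V"
proof -
  let ?B = "bell \<delta> Cf mX mY"
  let ?n = "real CARD('a \<times> 'b)"
  have "(\<lambda>k. (1 - \<delta>)^k) \<longlonglongrightarrow> 0" using assms by (intro LIMSEQ_power_zero) auto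
  moreover have "0 < 1 / ?n" by simp
  ultimately have "eventually (\<lambda>k. (1 - \<delta>)^k < 1 / ?n) sequentially" by (rule order_tendstoD(2))
  then obtain k where k: "(1 - \<delta>)^k < 1 / ?n" by (auto simp: eventually_sequentially)
  define c where "c = ?n * (1 - \<delta>)^k"
  have c0: "0 \<le> c" "c < 1" using k assms by (auto simp: c_def field_simps)
  have lip: "dist ((?B ^^ k) V) ((?B ^^ k) W) \<le> c * dist V W" for V W
  proof -
    have "\<bar>V$s - W$s\<bar> \<le> dist V W" for s
      using component_le_norm_cart[of "V - W" s] by (simp add: dist_norm)
    hence h: "\<bar>(?B ^^ k) V $ s - (?B ^^ k) W $ s\<bar> \<le> (1 - \<delta>)^k * dist V W" for s
      by (intro bell_iter[OF assms(2)])
    have "dist ((?B ^^ k) V) ((?B ^^ k) W) \<le> (\<Sum>s\<in>UNIV. \<bar>((?B ^^ k) V - (?B ^^ k) W) $ s\<bar>)"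
      unfolding dist_norm by (rule norm_le_l1_cart)
    also have "\<dots> \<le> (\<Sum>s\<in>(UNIV::('a\<times>'b) set). (1 - \<delta>)^k * dist V W)"
      by (intro sum_mono) (use h in simp)
    finally show ?thesis by (simp add: c_def mult.assoc)
  qed
  obtain V where V: "(?B ^^ k) V = V" and uq: "\<And>W. (?B ^^ k) W = W \<Longrightarrow> W = V"
    using banach_fix_type[OF c0 allI[OF allI[OF lip]]] by metis
  have "(?B ^^ k) (?B V) = ?B V" by (metis V funpow_swap1)
  hence "?B V = V" by (rule uq)
  thus ?thesis by blast
qed


lemma chain_ex_Suc: "ex (chain_law \<mu> K (Suc t)) f = ex (chain_law \<mu> K t) (\<lambda>s. ex (K t s) f)"
  by (simp add: ex_bind)

lemma tele_le:
  fixes \<mu> :: "('a::finite \<times> 'b::finite) pmf"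
  assumes "\<delta> \<le> 1" "\<And>t s. v s \<le> \<delta> * Cf s + (1 - \<delta>) * ex (K t s) v"
  shows "ex \<mu> v \<le> (\<Sum>t<n. \<delta> * (1 - \<delta>)^t * ex (chain_law \<mu> K t) Cf) + (1 - \<delta>)^n * ex (chain_law \<mu> K n) v"
proof (induction n)
  case 0 then show ?case by simp
next
  case (Suc n)
  have "ex (chain_law \<mu> K n) v \<le> ex (chain_law \<mu> K n) (\<lambda>s. \<delta> * Cf s + (1 - \<delta>) * ex (K n s) v)"
    by (rule ex_mono) (rule assms(2))
  also have "\<dots> = \<delta> * ex (chain_law \<mu> K n) Cf + (1 - \<delta>) * ex (chain_law \<mu> K (Suc n)) v"
    by (simp add: ex_lin ex_bind)
  finally have "(1 - \<delta>)^n * ex (chain_law \<mu> K n) v \<le> (1 - \<delta>)^n * (\<delta> * ex (chain_law \<mu> K n) Cf + (1 - \<delta>) * ex (chain_law \<mu> K (Suc n)) v)"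
    using assms(1) by (intro mult_left_mono) auto
  with Suc.IH show ?case by (simp add: algebra_simps)
qed

lemma tele_eq:
  fixes \<mu> :: "('a::finite \<times> 'b::finite) pmf"
  assumes "\<And>t s. v s = \<delta> * Cf s + (1 - \<delta>) * ex (K t s) v"
  shows "ex \<mu> v = (\<Sum>t<n. \<delta> * (1 - \<delta>)^t * ex (chain_law \<mu> K t) Cf) + (1 - \<delta>)^n * ex (chain_law \<mu> K n) v"
proof (induction n)
  case 0 then show ?case by simp
next
  case (Suc n)
  have "ex (chain_law \<mu> K n) v = ex (chain_law \<mu> K n) (\<lambda>s. \<delta> * Cf s + (1 - \<delta>) * ex (K n s) v)"
    by (rule arg_cong[where f="ex _"]) (rule ext, rule assms)
  also have "\<dots> = \<delta> * ex (chain_law \<mu> K n) Cf + (1 - \<delta>) * ex (chain_law \<mu> K (Suc n)) v"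
    by (simp add: ex_lin ex_bind)
  finally have "(1 - \<delta>)^n * ex (chain_law \<mu> K n) v = (1 - \<delta>)^n * (\<delta> * ex (chain_law \<mu> K n) Cf + (1 - \<delta>) * ex (chain_law \<mu> K (Suc n)) v)"
    by simp
  with Suc.IH show ?case by (simp add: algebra_simps)
qed

lemma disc_summable:
  fixes \<mu> :: "('a::finite \<times> 'b::finite) pmf"
  assumes "0 < \<delta>" "\<delta> \<le> 1"
  shows "summable (\<lambda>t. \<delta> * (1 - \<delta>)^t * ex (chain_law \<mu> K t) Cf)"
proof (rule summable_comparison_test)
  show "\<exists>N. \<forall>n\<ge>N. norm (\<delta> * (1 - \<delta>)^n * ex (chain_law \<mu> K n) Cf) \<le> \<delta> * (1 - \<delta>)^n * (\<Sum>s\<in>UNIV. \<bar>Cf s\<bar>)"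
    using assms by (auto simp: abs_mult intro!: mult_left_mono ex_abs)
  show "summable (\<lambda>n. \<delta> * (1 - \<delta>)^n * (\<Sum>s\<in>UNIV. \<bar>Cf s\<bar>))"
    using assms by (intro summable_mult summable_mult2 summable_geometric) auto
qed

lemma tail_lim:
  fixes \<mu> :: "('a::finite \<times> 'b::finite) pmf"
  assumes "0 < \<delta>" "\<delta> \<le> 1"
  shows "(\<lambda>n. (1 - \<delta>)^n * ex (chain_law \<mu> K n) v) \<longlonglongrightarrow> 0"
proof (rule Lim_null_comparison)
  show "eventually (\<lambda>n. norm ((1 - \<delta>)^n * ex (chain_law \<mu> K n) v) \<le> (1 - \<delta>)^n * (\<Sum>s\<in>UNIV. \<bar>v s\<bar>)) sequentially"
    using assms by (intro always_eventually allI) (auto simp: abs_mult intro!: mult_left_mono ex_abs)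
  show "(\<lambda>n. (1 - \<delta>)^n * (\<Sum>s\<in>UNIV. \<bar>v s\<bar>)) \<longlonglongrightarrow> 0"
    using assms by (intro tendsto_mult_left_zero LIMSEQ_power_zero) auto
qed

lemma disc_lim:
  fixes \<mu> :: "('a::finite \<times> 'b::finite) pmf"
  assumes "0 < \<delta>" "\<delta> \<le> 1"
  shows "(\<lambda>n. (\<Sum>t<n. \<delta> * (1 - \<delta>)^t * ex (chain_law \<mu> K t) (\<lambda>(x,y). C x y)) + (1 - \<delta>)^n * ex (chain_law \<mu> K n) v)
     \<longlonglongrightarrow> discounted_cost \<delta> C (\<mu>, K)"
proof -
  have "(\<lambda>n. (\<Sum>t<n. \<delta> * (1 - \<delta>)^t * ex (chain_law \<mu> K t) (\<lambda>(x,y). C x y)) + (1 - \<delta>)^n * ex (chain_law \<mu> K n) v)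
     \<longlonglongrightarrow> (\<Sum>t. \<delta> * (1 - \<delta>)^t * ex (chain_law \<mu> K t) (\<lambda>(x,y). C x y)) + 0"
    by (intro tendsto_add summable_LIMSEQ disc_summable tail_lim assms)
  thus ?thesis by (simp add: discounted_cost_def expectation_ex)
qed

lemma geo_eq:
  fixes \<mu> :: "('a::finite \<times> 'b::finite) pmf"
  assumes "0 < \<delta>" "\<delta> \<le> 1"
  shows "cost_at_geometric_time \<delta> C (\<mu>, K) = discounted_cost \<delta> C (\<mu>, K)"
proof -
  let ?L = "chain_law \<mu> K"
  let ?Cf = "\<lambda>(x,y). C x y"
  have sg: "summable (\<lambda>t. (1 - \<delta>)^t * \<delta> * pmf (?L t) s)" for s
  proof (rule summable_comparison_test)
    show "\<exists>N. \<forall>n\<ge>N. norm ((1 - \<delta>)^n * \<delta> * pmf (?L n) s) \<le> (1 - \<delta>)^n * \<delta>"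
      using assms by (auto simp: abs_mult intro!: mult_left_le pmf_le_1)
    show "summable (\<lambda>n. (1 - \<delta>)^n * \<delta>)"
      using assms by (intro summable_mult2 summable_geometric) auto
  qed
  have pb: "pmf (bind_pmf (geometric_pmf \<delta>) ?L) s = (\<Sum>t. (1 - \<delta>)^t * \<delta> * pmf (?L t) s)" for s
  proof -
    have "pmf (bind_pmf (geometric_pmf \<delta>) ?L) s = infsetsum (\<lambda>t. pmf (geometric_pmf \<delta>) t * pmf (?L t) s) UNIV"
      by (simp add: pmf_bind pmf_expectation_eq_infsetsum)
    also have "\<dots> = (\<Sum>t. pmf (geometric_pmf \<delta>) t * pmf (?L t) s)"
      by (rule infsetsum_nat') (use sg[of s] assms in \<open>simp add: abs_summable_on_nat_iff'\<close>)
    finally show ?thesis using assms by simp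
  qed
  have "cost_at_geometric_time \<delta> C (\<mu>, K) = (\<Sum>s\<in>UNIV. (\<Sum>t. (1 - \<delta>)^t * \<delta> * pmf (?L t) s) * ?Cf s)"
    unfolding cost_at_geometric_time_def by (simp add: expectation_ex ex_def pb)
  also have "\<dots> = (\<Sum>s\<in>UNIV. \<Sum>t. (1 - \<delta>)^t * \<delta> * pmf (?L t) s * ?Cf s)"
    by (intro sum.cong refl suminf_mult2 sg)
  also have "\<dots> = (\<Sum>t. \<Sum>s\<in>UNIV. (1 - \<delta>)^t * \<delta> * pmf (?L t) s * ?Cf s)"
    by (rule suminf_sum[symmetric]) (intro summable_mult2 sg)
  also have "\<dots> = (\<Sum>t. \<delta> * (1 - \<delta>)^t * ex (?L t) ?Cf)"
    by (simp add: ex_def sum_distrib_left mult_ac)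
  finally show ?thesis by (simp add: discounted_cost_def expectation_ex)
qed


theorem proposition14:
  fixes mX :: "'a::finite \<Rightarrow> 'a pmf" and nuX :: "'a pmf"
    and mY :: "'b::finite \<Rightarrow> 'b pmf" and nuY :: "'b pmf"
    and C :: "'a \<Rightarrow> 'b \<Rightarrow> real" and \<delta> :: real
  assumes "\<And>x y. C x y \<ge> 0"
    and "0 < \<delta>" and "\<delta> \<le> 1"
  shows "\<exists>c \<in> hom_markov_couplings mX nuX mY nuY.
           dWL_inf \<delta> mX nuX mY nuY C = cost_at_geometric_time \<delta> C c \<and>
           (\<forall>c' \<in> hom_markov_couplings mX nuX mY nuY.
              cost_at_geometric_time \<delta> C c \<le> cost_at_geometric_time \<delta> C c')"
proof -
  define Cf where "Cf = (\<lambda>(x,y). C x y)"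
  obtain V where V: "bell \<delta> Cf mX mY V = V" using bell_fix[OF assms(2,3)] by blast
  define v where "v = vec_nth V"
  have beq: "v s = \<delta> * Cf s + (1 - \<delta>) * ex (pol mX mY v s) v" for s
  proof -
    have "v s = bell \<delta> Cf mX mY V $ s" using V by (simp add: v_def)
    thus ?thesis by (simp add: bell_def v_def)
  qed
  have ble: "v s \<le> \<delta> * Cf s + (1 - \<delta>) * ex q v" if "is_coupling q (mX (fst s)) (mY (snd s))" for s q
  proof -
    have "(1 - \<delta>) * ex (pol mX mY v s) v \<le> (1 - \<delta>) * ex q v"
      using assms(3) pol(2)[where mX=mX and mY=mY and V=v, OF that] by (intro mult_left_mono) auto
    thus ?thesis using beq[of s] by linarith
  qed
  obtain \<mu>s where \<mu>s: "is_coupling \<mu>s nuX nuY" "\<And>q. is_coupling q nuX nuY \<Longrightarrow> ex \<mu>s v \<le> ex q v"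
    using coupling_min[of nuX nuY v] by blast
  define cs where "cs = (\<mu>s, (\<lambda>t::nat. pol mX mY v))"
  have csH: "cs \<in> hom_markov_couplings mX nuX mY nuY"
    unfolding cs_def hom_markov_couplings_def markov_couplings_def
    using \<mu>s(1) pol(1)[where mX=mX and mY=mY and V=v] by fastforce
  have csM: "cs \<in> markov_couplings mX nuX mY nuY"
    using csH unfolding hom_markov_couplings_def by blast
  have cost_cs: "discounted_cost \<delta> C cs = ex \<mu>s v"
  proof -
    have "(\<lambda>n. (\<Sum>t<n. \<delta> * (1 - \<delta>)^t * ex (chain_law \<mu>s (\<lambda>t. pol mX mY v) t) (\<lambda>(x,y). C x y))
        + (1 - \<delta>)^n * ex (chain_law \<mu>s (\<lambda>t. pol mX mY v) n) v) \<longlonglongrightarrow> discounted_cost \<delta> C cs"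
      unfolding cs_def by (rule disc_lim[OF assms(2,3)])
    moreover have "(\<lambda>n. (\<Sum>t<n. \<delta> * (1 - \<delta>)^t * ex (chain_law \<mu>s (\<lambda>t. pol mX mY v) t) (\<lambda>(x,y). C x y))
        + (1 - \<delta>)^n * ex (chain_law \<mu>s (\<lambda>t. pol mX mY v) n) v) = (\<lambda>n. ex \<mu>s v)"
      by (rule ext, rule tele_eq[symmetric, of v \<delta> "\<lambda>(x,y). C x y"]) (use beq in \<open>simp add: Cf_def\<close>)
    ultimately show ?thesis by (simp add: LIMSEQ_const_iff)
  qed
  have lower: "ex \<mu>s v \<le> discounted_cost \<delta> C c" if "c \<in> markov_couplings mX nuX mY nuY" for c
  proof -
    obtain \<mu> K where c: "c = (\<mu>, K)" by (cases c)
    have cpl: "is_coupling \<mu> nuX nuY" "\<And>t x y. is_coupling (K t (x, y)) (mX x) (mY y)"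
      using that unfolding c markov_couplings_def by auto
    have K: "v s \<le> \<delta> * Cf s + (1 - \<delta>) * ex (K t s) v" for t s
      using ble[of "K t s" s] cpl(2)[of t "fst s" "snd s"] by simp
    have "ex \<mu>s v \<le> ex \<mu> v" by (rule \<mu>s(2)[OF cpl(1)])
    also have "ex \<mu> v \<le> discounted_cost \<delta> C c"
    proof (rule LIMSEQ_le_const)
      show "(\<lambda>n. (\<Sum>t<n. \<delta> * (1 - \<delta>)^t * ex (chain_law \<mu> K t) (\<lambda>(x,y). C x y))
        + (1 - \<delta>)^n * ex (chain_law \<mu> K n) v) \<longlonglongrightarrow> discounted_cost \<delta> C c"
        unfolding c by (rule disc_lim[OF assms(2,3)])
      show "\<exists>N. \<forall>n\<ge>N. ex \<mu> v \<le> (\<Sum>t<n. \<delta> * (1 - \<delta>)^t * ex (chain_law \<mu> K t) (\<lambda>(x,y). C x y))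
        + (1 - \<delta>)^n * ex (chain_law \<mu> K n) v"
        using tele_le[OF assms(3), of v Cf K \<mu>] K unfolding Cf_def by blast
    qed
    finally show ?thesis .
  qed
  have geo: "cost_at_geometric_time \<delta> C c = discounted_cost \<delta> C c" for c :: "('a \<times> 'b) pmf \<times> _"
    using geo_eq[OF assms(2,3), of C "fst c" "snd c"] by simp
  have dwl: "dWL_inf \<delta> mX nuX mY nuY C = discounted_cost \<delta> C cs"
    unfolding dWL_inf_def
  proof (rule cInf_eq_minimum)
    show "discounted_cost \<delta> C cs \<in> discounted_cost \<delta> C ` markov_couplings mX nuX mY nuY"
      using csM by (rule imageI)
    fix x assume "x \<in> discounted_cost \<delta> C ` markov_couplings mX nuX mY nuY"
    thus "discounted_cost \<delta> C cs \<le> x" using lower cost_cs by auto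
  qed
  show ?thesis
  proof (rule bexI[OF _ csH], intro conjI ballI)
    show "dWL_inf \<delta> mX nuX mY nuY C = cost_at_geometric_time \<delta> C cs" using dwl geo by simp
    fix c' assume "c' \<in> hom_markov_couplings mX nuX mY nuY"
    hence "c' \<in> markov_couplings mX nuX mY nuY" unfolding hom_markov_couplings_def by blast
    thus "cost_at_geometric_time \<delta> C cs \<le> cost_at_geometric_time \<delta> C c'"
      using lower cost_cs geo by simp
  qed
qed

end
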